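(* Let $R$ be a Dedekind domain with fraction field $K$ and let $C$ be a nonzero ideal of $R$. Let $E$ be the set of fractional ideals of $R$ in $K$ containing $R$, and define subsets $A_0\subseteq A_1\subseteq\cdots$ of $E$ by $A_0=\{R\}$ and, for $i>0$, $$A_i=A_{i-1}\cup\{I\in E:\ \forall x\in IC\setminus C\ \exists y\in C \text{ such that } (x-y)^{-1}IC\in A_{i-1}\}.$$ If $i\ge 1$ and $I\in A_i\setminus A_{i-1}$, then the ideal class of $I$ equals the ideal class of $C^{-i}$ in the class group of $R$.
   Context: $[J]$ denotes the class of a fractional ideal $J$ in the ideal class group of $R$. *)

theory Defs
  imports "HOL-Computational_Algebra.Polynomial"
begin

text \<open>The ambient field K is the type 'k; R is a subring of K whose fraction field is K.\<close>

definition subring_of :: "'k::field set \<Rightarrow> bool" where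
  "subring_of R \<longleftrightarrow> 0 \<in> R \<and> 1 \<in> R \<and>
     (\<forall>a\<in>R. \<forall>b\<in>R. a + b \<in> R \<and> a - b \<in> R \<and> a * b \<in> R)"

definition is_ideal :: "'k::field set \<Rightarrow> 'k set \<Rightarrow> bool" where
  "is_ideal R C \<longleftrightarrow> C \<subseteq> R \<and> 0 \<in> C \<and>
     (\<forall>a\<in>C. \<forall>b\<in>C. a + b \<in> C \<and> a - b \<in> C) \<and> (\<forall>r\<in>R. \<forall>c\<in>C. r * c \<in> C)"

definition is_prime_ideal :: "'k::field set \<Rightarrow> 'k set \<Rightarrow> bool" where
  "is_prime_ideal R P \<longleftrightarrow> is_ideal R P \<and> P \<noteq> R \<and>
     (\<forall>a\<in>R. \<forall>b\<in>R. a * b \<in> P \<longrightarrow> a \<in> P \<or> b \<in> P)"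

definition is_maximal_ideal :: "'k::field set \<Rightarrow> 'k set \<Rightarrow> bool" where
  "is_maximal_ideal R M \<longleftrightarrow> is_ideal R M \<and> M \<noteq> R \<and>
     (\<forall>J. is_ideal R J \<and> M \<subseteq> J \<longrightarrow> J = M \<or> J = R)"

definition noetherian :: "'k::field set \<Rightarrow> bool" where
  "noetherian R \<longleftrightarrow> (\<forall>f :: nat \<Rightarrow> 'k set. (\<forall>n. is_ideal R (f n)) \<and> (\<forall>n. f n \<subseteq> f (Suc n))
      \<longrightarrow> (\<exists>N. \<forall>n\<ge>N. f n = f N))"

definition integrally_closed :: "'k::field set \<Rightarrow> bool" where
  "integrally_closed R \<longleftrightarrow> (\<forall>x. (\<exists>p. lead_coeff p = 1 \<and> (\<forall>i. coeff p i \<in> R) \<and> poly p x = 0)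
      \<longrightarrow> x \<in> R)"

definition is_fraction_field :: "'k::field set \<Rightarrow> bool" where
  "is_fraction_field R \<longleftrightarrow> (\<forall>z. \<exists>a\<in>R. \<exists>b\<in>R. b \<noteq> 0 \<and> z = a / b)"

definition dedekind_domain :: "'k::field set \<Rightarrow> bool" where
  "dedekind_domain R \<longleftrightarrow> subring_of R \<and> is_fraction_field R \<and> noetherian R \<and>
     integrally_closed R \<and> (\<forall>P. is_prime_ideal R P \<and> P \<noteq> {0} \<longrightarrow> is_maximal_ideal R P)"

definition frac_ideal :: "'k::field set \<Rightarrow> 'k set \<Rightarrow> bool" where
  "frac_ideal R I \<longleftrightarrow> 0 \<in> I \<and> I \<noteq> {0} \<and> (\<forall>a\<in>I. \<forall>b\<in>I. a + b \<in> I) \<and>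
     (\<forall>r\<in>R. \<forall>x\<in>I. r * x \<in> I) \<and> (\<exists>d\<in>R. d \<noteq> 0 \<and> (\<lambda>x. d * x) ` I \<subseteq> R)"

definition mod_prod :: "'k::comm_ring set \<Rightarrow> 'k set \<Rightarrow> 'k set" where
  "mod_prod I J = {z. \<exists>(n::nat) f g. (\<forall>k<n. f k \<in> I \<and> g k \<in> J) \<and> z = (\<Sum>k<n. f k * g k)}"

primrec ideal_pow :: "'k::field set \<Rightarrow> 'k set \<Rightarrow> nat \<Rightarrow> 'k set" where
  "ideal_pow R C 0 = R"
| "ideal_pow R C (Suc i) = mod_prod (ideal_pow R C i) C"

definition frac_inv :: "'k::field set \<Rightarrow> 'k set \<Rightarrow> 'k set" where
  "frac_inv R J = {x. \<forall>c\<in>J. x * c \<in> R}"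

definition scale_set :: "'k::field \<Rightarrow> 'k set \<Rightarrow> 'k set" where
  "scale_set a S = (\<lambda>x. a * x) ` S"

definition ideal_class :: "'k::field set \<Rightarrow> 'k set \<Rightarrow> 'k set set" where
  "ideal_class R J = {I. frac_ideal R I \<and> (\<exists>a. a \<noteq> 0 \<and> I = scale_set a J)}"

definition E_set :: "'k::field set \<Rightarrow> 'k set set" where
  "E_set R = {I. frac_ideal R I \<and> R \<subseteq> I}"

primrec A_set :: "'k::field set \<Rightarrow> 'k set \<Rightarrow> nat \<Rightarrow> 'k set set" where
  "A_set R C 0 = {R}"
| "A_set R C (Suc i) = A_set R C i \<union>
     {I \<in> E_set R. \<forall>x \<in> mod_prod I C - C. \<exists>y\<in>C.
         scale_set (inverse (x - y)) (mod_prod I C) \<in> A_set R C i}"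

end

theory Submission
  imports Defs
begin

inductive_set addcl :: "'a::comm_ring set \<Rightarrow> 'a set" for S where
  addcl0: "0 \<in> addcl S"
| addclI: "s \<in> S \<Longrightarrow> x \<in> addcl S \<Longrightarrow> s + x \<in> addcl S"

definition pairs :: "'a::comm_ring set \<Rightarrow> 'a set \<Rightarrow> 'a set" where
  "pairs I J = {a * b | a b. a \<in> I \<and> b \<in> J}"

lemma addcl_add: "x \<in> addcl S \<Longrightarrow> y \<in> addcl S \<Longrightarrow> x + y \<in> addcl S"
  by (induction x rule: addcl.induct) (auto simp: add.assoc intro: addcl.intros)

lemma addcl_mem: "s \<in> S \<Longrightarrow> s \<in> addcl S"
  using addclI[OF _ addcl0, of s S] by simp

lemma addcl_least:
  assumes "0 \<in> M" "\<And>a b. a \<in> M \<Longrightarrow> b \<in> M \<Longrightarrow> a + b \<in> M" "S \<subseteq> M"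
  shows "addcl S \<subseteq> M"
proof
  fix x assume "x \<in> addcl S" then show "x \<in> M"
    by (induction x rule: addcl.induct) (use assms in auto)
qed

lemma mod_prod_sums: "mod_prod I J = addcl (pairs I J)"
proof
  show "mod_prod I J \<subseteq> addcl (pairs I J)"
  proof
    fix z assume "z \<in> mod_prod I J"
    then obtain n :: nat and f g where fg: "\<forall>k<n. f k \<in> I \<and> g k \<in> J" and z: "z = (\<Sum>k<n. f k * g k)"
      unfolding mod_prod_def by blast
    have "(\<forall>k<n. f k \<in> I \<and> g k \<in> J) \<longrightarrow> (\<Sum>k<n. f k * g k) \<in> addcl (pairs I J)"
    proof (induction n)
      case 0 then show ?case by (simp add: addcl0)
      case (Suc n)
      show ?case
      proof
        assume h: "\<forall>k<Suc n. f k \<in> I \<and> g k \<in> J"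
        then have "f n * g n \<in> pairs I J" unfolding pairs_def by auto
        moreover have "(\<Sum>k<n. f k * g k) \<in> addcl (pairs I J)" using Suc h by auto
        ultimately show "(\<Sum>k<Suc n. f k * g k) \<in> addcl (pairs I J)"
          by (simp add: addcl_add addcl_mem)
      qed
    qed
    then show "z \<in> addcl (pairs I J)" using fg z by blast
  qed
next
  show "addcl (pairs I J) \<subseteq> mod_prod I J"
  proof
    fix z assume "z \<in> addcl (pairs I J)"
    then show "z \<in> mod_prod I J"
    proof (induction z rule: addcl.induct)
      case addcl0
      then show ?case unfolding mod_prod_def by (rule CollectI, rule exI[of _ 0]) auto
    next
      case (addclI s x)
      then obtain a b where ab: "a \<in> I" "b \<in> J" "s = a * b" unfolding pairs_def by blast
      from addclI obtain n :: nat and f g where fg: "\<forall>k<n. f k \<in> I \<and> g k \<in> J" and x: "x = (\<Sum>k<n. f k * g k)"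
        unfolding mod_prod_def by blast
      define f' where "f' = case_nat a f"
      define g' where "g' = case_nat b g"
      have "\<forall>k<Suc n. f' k \<in> I \<and> g' k \<in> J"
        using fg ab by (auto simp: f'_def g'_def less_Suc_eq_0_disj)
      moreover have "s + x = (\<Sum>k<Suc n. f' k * g' k)"
        unfolding sum.lessThan_Suc_shift by (simp add: f'_def g'_def ab x)
      ultimately show ?case unfolding mod_prod_def by blast
    qed
  qed
qed

lemma mp_mem: "a \<in> I \<Longrightarrow> b \<in> J \<Longrightarrow> a * b \<in> mod_prod I J"
  unfolding mod_prod_sums pairs_def by (rule addcl_mem) blast

lemma mp_zero: "0 \<in> mod_prod I J"
  unfolding mod_prod_sums by (rule addcl0)

lemma mp_add: "x \<in> mod_prod I J \<Longrightarrow> y \<in> mod_prod I J \<Longrightarrow> x + y \<in> mod_prod I J"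
  unfolding mod_prod_sums by (rule addcl_add)

lemma mp_least:
  assumes "0 \<in> M" "\<And>a b. a \<in> M \<Longrightarrow> b \<in> M \<Longrightarrow> a + b \<in> M"
    "\<And>a b. a \<in> I \<Longrightarrow> b \<in> J \<Longrightarrow> a * b \<in> M"
  shows "mod_prod I J \<subseteq> M"
  unfolding mod_prod_sums by (rule addcl_least) (use assms in \<open>auto simp: pairs_def\<close>)

lemma mp_induct[consumes 1, case_names zero step]:
  assumes "z \<in> mod_prod I J" "P 0"
    "\<And>a b x. a \<in> I \<Longrightarrow> b \<in> J \<Longrightarrow> x \<in> mod_prod I J \<Longrightarrow> P x \<Longrightarrow> P (a * b + x)"
  shows "P z"
proof -
  have "z \<in> addcl (pairs I J)" using assms(1) by (simp add: mod_prod_sums)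
  then show ?thesis
  proof (induction z rule: addcl.induct)
    case addcl0 then show ?case using assms(2) .
  next
    case (addclI s x)
    then obtain a b where "a \<in> I" "b \<in> J" "s = a * b" unfolding pairs_def by blast
    then show ?case using assms(3) addclI by (simp add: mod_prod_sums)
  qed
qed

lemma mp_comm: "mod_prod I J = mod_prod J I"
proof -
  have "pairs I J = pairs J I" unfolding pairs_def
    apply auto
     apply (metis mult.commute)
    apply (metis mult.commute)
    done
  then show ?thesis by (simp add: mod_prod_sums)
qed

lemma mp_mono: "I \<subseteq> I' \<Longrightarrow> J \<subseteq> J' \<Longrightarrow> mod_prod I J \<subseteq> mod_prod I' J'"
  by (rule mp_least) (auto intro: mp_zero mp_add mp_mem)

lemma mp_assoc_sub: "mod_prod (mod_prod I J) L \<subseteq> mod_prod I (mod_prod J L)"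
proof (rule mp_least)
  fix z l assume z: "z \<in> mod_prod I J" and l: "l \<in> L"
  from z show "z * l \<in> mod_prod I (mod_prod J L)"
  proof (induction rule: mp_induct)
    case zero then show ?case by (simp add: mp_zero)
  next
    case (step a b x)
    have "(a * b + x) * l = a * (b * l) + x * l" by (simp add: algebra_simps)
    then show ?case using step l by (auto intro!: mp_add mp_mem)
  qed
qed (auto intro: mp_zero mp_add)

lemma mp_assoc: "mod_prod (mod_prod I J) L = mod_prod I (mod_prod J L)"
proof
  show "mod_prod (mod_prod I J) L \<subseteq> mod_prod I (mod_prod J L)" by (rule mp_assoc_sub)
  have "mod_prod I (mod_prod J L) = mod_prod (mod_prod L J) I" by (simp add: mp_comm)
  also have "\<dots> \<subseteq> mod_prod L (mod_prod J I)" by (rule mp_assoc_sub)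
  also have "\<dots> = mod_prod (mod_prod I J) L" by (simp add: mp_comm)
  finally show "mod_prod I (mod_prod J L) \<subseteq> mod_prod (mod_prod I J) L" .
qed

lemma mp_swap4: "mod_prod (mod_prod A B) (mod_prod C D) = mod_prod (mod_prod A C) (mod_prod B D)"
proof -
  have "mod_prod (mod_prod A B) (mod_prod C D) = mod_prod A (mod_prod B (mod_prod C D))"
    by (rule mp_assoc)
  also have "mod_prod B (mod_prod C D) = mod_prod C (mod_prod B D)"
    by (simp only: mp_assoc[symmetric] mp_comm[of B C])
  also have "mod_prod A (mod_prod C (mod_prod B D)) = mod_prod (mod_prod A C) (mod_prod B D)"
    by (rule mp_assoc[symmetric])
  finally show ?thesis .
qed

lemma scale_scale: "scale_set a (scale_set b S) = scale_set (a * b) S"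
  unfolding scale_set_def by (auto simp: image_image mult.assoc)

lemma scale_one: "scale_set 1 S = S"
  unfolding scale_set_def by simp

lemma mp_scale: "mod_prod (scale_set c I) J = scale_set c (mod_prod I J)"
proof
  show "mod_prod (scale_set c I) J \<subseteq> scale_set c (mod_prod I J)"
  proof (rule mp_least)
    show "0 \<in> scale_set c (mod_prod I J)" unfolding scale_set_def
      using mp_zero by (metis image_eqI mult_zero_right)
    fix u v assume "u \<in> scale_set c (mod_prod I J)" "v \<in> scale_set c (mod_prod I J)"
    then obtain u' v' where "u' \<in> mod_prod I J" "v' \<in> mod_prod I J" "u = c * u'" "v = c * v'"
      unfolding scale_set_def by blast
    then show "u + v \<in> scale_set c (mod_prod I J)" unfolding scale_set_def
      by (metis distrib_left image_eqI mp_add)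
  next
    fix a b assume "a \<in> scale_set c I" "b \<in> J"
    then obtain a' where "a' \<in> I" "a = c * a'" unfolding scale_set_def by blast
    then show "a * b \<in> scale_set c (mod_prod I J)" unfolding scale_set_def
      using \<open>b \<in> J\<close> by (metis image_eqI mp_mem mult.assoc)
  qed
next
  show "scale_set c (mod_prod I J) \<subseteq> mod_prod (scale_set c I) J"
  proof
    fix z assume "z \<in> scale_set c (mod_prod I J)"
    then obtain w where w: "w \<in> mod_prod I J" "z = c * w" unfolding scale_set_def by blast
    from w(1) have "c * w \<in> mod_prod (scale_set c I) J"
    proof (induction rule: mp_induct)
      case zero then show ?case by (simp add: mp_zero)
    next
      case (step a b x)
      have "c * (a * b + x) = (c * a) * b + c * x" by (simp add: algebra_simps)
      moreover have "c * a \<in> scale_set c I" using step unfolding scale_set_def by blast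
      ultimately show ?case using step by (auto intro!: mp_add mp_mem)
    qed
    then show "z \<in> mod_prod (scale_set c I) J" using w by simp
  qed
qed

definition rmod :: "'k::field set \<Rightarrow> 'k set \<Rightarrow> bool" where
  "rmod R M \<longleftrightarrow> 0 \<in> M \<and> (\<forall>a\<in>M. \<forall>b\<in>M. a + b \<in> M) \<and> (\<forall>r\<in>R. \<forall>x\<in>M. r * x \<in> M)"

lemma mp_rmod: assumes "rmod R I" shows "rmod R (mod_prod I J)"
  unfolding rmod_def
proof (intro conjI ballI)
  fix r z assume r: "r \<in> R" and z: "z \<in> mod_prod I J"
  from z show "r * z \<in> mod_prod I J"
  proof (induction rule: mp_induct)
    case zero then show ?case by (simp add: mp_zero)
  next
    case (step a b x)
    have "r * (a * b + x) = (r * a) * b + r * x" by (simp add: algebra_simps)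
    moreover have "r * a \<in> I" using assms r step unfolding rmod_def by blast
    ultimately show ?case using step by (auto intro!: mp_add mp_mem)
  qed
qed (auto intro: mp_zero mp_add)

lemma mp_rmod2: assumes "rmod R J" shows "rmod R (mod_prod I J)"
  using mp_rmod[OF assms] mp_comm by metis

lemma subring_rmod: "subring_of R \<Longrightarrow> rmod R R"
  unfolding subring_of_def rmod_def by auto

lemma mp_unit: assumes "subring_of R" "rmod R M" shows "mod_prod M R = M"
proof
  show "mod_prod M R \<subseteq> M"
  proof (rule mp_least)
    fix a b assume "a \<in> M" "b \<in> R"
    then show "a * b \<in> M" using assms(2) unfolding rmod_def by (metis mult.commute)
  qed (use assms in \<open>auto simp: rmod_def\<close>)
  show "M \<subseteq> mod_prod M R"
  proof
    fix m assume "m \<in> M"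
    then have "m * 1 \<in> mod_prod M R" using assms(1) by (intro mp_mem) (auto simp: subring_of_def)
    then show "m \<in> mod_prod M R" by simp
  qed
qed

lemma mp_unit2: assumes "subring_of R" "rmod R M" shows "mod_prod R M = M"
  using mp_unit[OF assms] mp_comm by metis

lemma frac_inv_rmod: "subring_of R \<Longrightarrow> rmod R (frac_inv R J)"
  unfolding rmod_def frac_inv_def subring_of_def by (auto simp: distrib_right mult.assoc)

lemma mp_inv_sub: "subring_of R \<Longrightarrow> mod_prod J (frac_inv R J) \<subseteq> R"
  by (rule mp_least) (auto simp: subring_of_def frac_inv_def mult.commute)

lemma inv_unique:
  assumes "subring_of R" "rmod R N" "mod_prod M N = R"
  shows "frac_inv R M = N"
proof
  show "N \<subseteq> frac_inv R M"
  proof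
    fix n assume n: "n \<in> N"
    have "\<forall>c\<in>M. n * c \<in> R"
    proof
      fix c assume "c \<in> M"
      then have "c * n \<in> R" using mp_mem[of c M n N] n assms(3) by simp
      then show "n * c \<in> R" by (simp add: mult.commute)
    qed
    then show "n \<in> frac_inv R M" unfolding frac_inv_def by simp
  qed
  show "frac_inv R M \<subseteq> N"
  proof
    fix x assume x: "x \<in> frac_inv R M"
    have "\<forall>z. z \<in> mod_prod M N \<longrightarrow> x * z \<in> N"
    proof (intro allI impI)
      fix z assume "z \<in> mod_prod M N"
      then show "x * z \<in> N"
      proof (induction rule: mp_induct)
        case zero then show ?case using assms(2) by (simp add: rmod_def)
      next
        case (step a b y)
        have "x * (a * b + y) = (x * a) * b + x * y" by (simp add: algebra_simps)
        moreover have "x * a \<in> R" using x step unfolding frac_inv_def by blast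
        ultimately show ?case using step assms(2) unfolding rmod_def by auto
      qed
    qed
    moreover have "1 \<in> mod_prod M N" using assms(1,3) by (simp add: subring_of_def)
    ultimately show "x \<in> N" by force
  qed
qed

lemma rmod_ideal: "subring_of R \<Longrightarrow> rmod R M \<Longrightarrow> M \<subseteq> R \<Longrightarrow> is_ideal R M"
proof -
  assume s: "subring_of R" and m: "rmod R M" and "M \<subseteq> R"
  have m1: "-1 \<in> R" using s unfolding subring_of_def by (metis diff_0)
  have "\<forall>a\<in>M. \<forall>b\<in>M. a - b \<in> M"
  proof (intro ballI)
    fix a b assume "a \<in> M" "b \<in> M"
    then have "a + (-1) * b \<in> M" using m m1 unfolding rmod_def by blast
    then show "a - b \<in> M" by simp
  qed
  then show ?thesis using m \<open>M \<subseteq> R\<close> unfolding is_ideal_def rmod_def by blast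
qed

lemma ideal_rmod: "is_ideal R M \<Longrightarrow> rmod R M"
  unfolding is_ideal_def rmod_def by blast

lemma mp_ideal: assumes "subring_of R" "is_ideal R I" "is_ideal R J"
  shows "is_ideal R (mod_prod I J)"
proof (rule rmod_ideal[OF assms(1)])
  show "rmod R (mod_prod I J)" using mp_rmod ideal_rmod assms(2) by blast
  show "mod_prod I J \<subseteq> R"
    by (rule mp_least) (use assms in \<open>auto simp: subring_of_def is_ideal_def\<close>)
qed


locale dd = fixes R :: "'k::field set" assumes ded: "dedekind_domain R"
begin

lemma sub: "subring_of R" using ded by (simp add: dedekind_domain_def)
lemma R0: "0 \<in> R" using sub by (simp add: subring_of_def)
lemma R1: "1 \<in> R" using sub by (simp add: subring_of_def)
lemma Radd: "a \<in> R \<Longrightarrow> b \<in> R \<Longrightarrow> a + b \<in> R" using sub by (simp add: subring_of_def)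
lemma Rdiff: "a \<in> R \<Longrightarrow> b \<in> R \<Longrightarrow> a - b \<in> R" using sub by (simp add: subring_of_def)
lemma Rmult: "a \<in> R \<Longrightarrow> b \<in> R \<Longrightarrow> a * b \<in> R" using sub by (simp add: subring_of_def)
lemma noeth: "noetherian R" using ded by (simp add: dedekind_domain_def)
lemma intcl: "integrally_closed R" using ded by (simp add: dedekind_domain_def)
lemma primemax: "is_prime_ideal R P \<Longrightarrow> P \<noteq> {0} \<Longrightarrow> is_maximal_ideal R P"
  using ded by (simp add: dedekind_domain_def)
lemma R_ideal: "is_ideal R R" using sub unfolding is_ideal_def subring_of_def by auto

lemma noeth_induct:
  assumes step: "\<And>A. is_ideal R A \<Longrightarrow> (\<And>B. is_ideal R B \<Longrightarrow> A \<subset> B \<Longrightarrow> Q B) \<Longrightarrow> Q A"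
    and A0: "is_ideal R A0"
  shows "Q A0"
proof (rule ccontr)
  assume nq: "\<not> Q A0"
  have ex: "\<exists>B. is_ideal R B \<and> A \<subset> B \<and> \<not> Q B" if "is_ideal R A" "\<not> Q A" for A
    using step that by blast
  define f where "f = rec_nat A0 (\<lambda>_ A. SOME B. is_ideal R B \<and> A \<subset> B \<and> \<not> Q B)"
  have f0: "f 0 = A0" by (simp add: f_def)
  have fS: "f (Suc n) = (SOME B. is_ideal R B \<and> f n \<subset> B \<and> \<not> Q B)" for n by (simp add: f_def)
  have P: "is_ideal R (f n) \<and> \<not> Q (f n) \<and> f n \<subset> f (Suc n)" for n
  proof (induction n)
    case 0
    show ?case unfolding fS using someI_ex[OF ex[of "f 0"]] f0 A0 nq by auto
  next
    case (Suc n)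
    have "is_ideal R (f (Suc n)) \<and> f n \<subset> f (Suc n) \<and> \<not> Q (f (Suc n))"
      unfolding fS using someI_ex[OF ex[of "f n"]] Suc by auto
    then show ?case using someI_ex[OF ex[of "f (Suc n)"]] fS[of "Suc n"] by auto
  qed
  have "(\<forall>n. is_ideal R (f n)) \<and> (\<forall>n. f n \<subseteq> f (Suc n))" using P by blast
  then have "\<exists>N. \<forall>n\<ge>N. f n = f N" using noeth[unfolded noetherian_def, rule_format, of f] by blast
  then obtain N where "\<forall>n\<ge>N. f n = f N" by blast
  then have "f (Suc N) = f N" using le_SucI order_refl by blast
  then show False using P[of N] by auto
qed

lemma ideal_sum:
  assumes "is_ideal R A" "finite S" "\<forall>i\<in>S. g i \<in> A" shows "sum g S \<in> A"
  using assms(2,3)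
proof (induction S rule: finite_induct)
  case empty then show ?case using assms(1) by (simp add: is_ideal_def)
next
  case (insert i S) then show ?case using assms(1) by (simp add: is_ideal_def)
qed

lemma ideal_mult: "is_ideal R A \<Longrightarrow> r \<in> R \<Longrightarrow> a \<in> A \<Longrightarrow> r * a \<in> A"
  by (simp add: is_ideal_def)
lemma ideal_mult2: "is_ideal R A \<Longrightarrow> r \<in> R \<Longrightarrow> a \<in> A \<Longrightarrow> a * r \<in> A"
  unfolding is_ideal_def by (metis mult.commute)
lemma ideal_sub: "is_ideal R A \<Longrightarrow> a \<in> A \<Longrightarrow> a \<in> R"
  by (auto simp: is_ideal_def)
lemma ideal_nz: "is_ideal R A \<Longrightarrow> A \<noteq> {0} \<Longrightarrow> \<exists>a\<in>A. a \<noteq> 0"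
  by (auto simp: is_ideal_def)

lemma stable_in_R:
  assumes A: "is_ideal R A" "A \<noteq> {0}" and st: "\<forall>a\<in>A. x * a \<in> A"
  shows "x \<in> R"
proof -
  obtain a where a: "a \<in> A" "a \<noteq> 0" using ideal_nz A by blast
  have xa: "x ^ n * a \<in> A" for n
  proof (induction n)
    case 0 then show ?case using a by simp
  next
    case (Suc n)
    have "x * (x ^ n * a) \<in> A" using st Suc by blast
    then show ?case by (simp add: mult.assoc)
  qed
  define J where "J n = {a * poly p x | p. (\<forall>i. coeff p i \<in> R) \<and> degree p \<le> n}" for n
  have inA: "a * poly p x \<in> A" if "\<forall>i. coeff p i \<in> R" for p
  proof -
    have "a * poly p x = (\<Sum>i\<le>degree p. coeff p i * (x ^ i * a))"
      by (simp add: poly_altdef sum_distrib_left algebra_simps)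
    also have "\<dots> \<in> A" using that xa A(1) by (intro ideal_sum) (auto intro: ideal_mult)
    finally show ?thesis .
  qed
  have Jid: "is_ideal R (J n)" for n
    unfolding is_ideal_def
  proof (intro conjI ballI)
    show "J n \<subseteq> R" unfolding J_def using inA A(1) ideal_sub by blast
    show "0 \<in> J n" unfolding J_def using R0 by (auto intro!: exI[of _ 0])
  next
    fix u v assume "u \<in> J n" "v \<in> J n"
    then obtain p q where p: "\<forall>i. coeff p i \<in> R" "degree p \<le> n" "u = a * poly p x"
      and q: "\<forall>i. coeff q i \<in> R" "degree q \<le> n" "v = a * poly q x" unfolding J_def by blast
    have "u + v = a * poly (p + q) x" using p q by (simp add: algebra_simps)
    moreover have "\<forall>i. coeff (p + q) i \<in> R" using p q Radd by simp
    moreover have "degree (p + q) \<le> n" using p q degree_add_le by blast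
    ultimately show "u + v \<in> J n" unfolding J_def by blast
    have "u - v = a * poly (p - q) x" using p q by (simp add: algebra_simps)
    moreover have "\<forall>i. coeff (p - q) i \<in> R" using p q Rdiff by simp
    moreover have "degree (p - q) \<le> n" using p q degree_diff_le by blast
    ultimately show "u - v \<in> J n" unfolding J_def by blast
  next
    fix r u assume r: "r \<in> R" and "u \<in> J n"
    then obtain p where p: "\<forall>i. coeff p i \<in> R" "degree p \<le> n" "u = a * poly p x"
      unfolding J_def by blast
    have "r * u = a * poly (smult r p) x" using p by (simp add: algebra_simps)
    moreover have "\<forall>i. coeff (smult r p) i \<in> R" using p r Rmult by simp
    moreover have "degree (smult r p) \<le> n" using p by (simp add: degree_smult_le)
    ultimately show "r * u \<in> J n" unfolding J_def by blast
  qed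
  have Jmono: "J n \<subseteq> J (Suc n)" for n unfolding J_def by fastforce
  have "\<exists>N. \<forall>n\<ge>N. J n = J N"
    using noeth[unfolded noetherian_def, rule_format, of J] Jid Jmono by blast
  then obtain N where N: "\<forall>n\<ge>N. J n = J N" by blast
  have cm: "\<forall>i. coeff (monom (1::'k) (Suc N)) i \<in> R" using R0 R1 by (simp add: coeff_monom)
  have "a * x ^ Suc N \<in> J (Suc N)" unfolding J_def
    using cm by (auto intro!: exI[of _ "monom 1 (Suc N)"] simp: poly_monom degree_monom_le)
  moreover have "J (Suc N) = J N" using N le_SucI order_refl by blast
  ultimately have "a * x ^ Suc N \<in> J N" by simp
  then obtain p where p: "\<forall>i. coeff p i \<in> R" "degree p \<le> N" "a * x ^ Suc N = a * poly p x"
    unfolding J_def by blast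
  define q where "q = monom 1 (Suc N) - p"
  have pq: "poly q x = 0" using p a by (simp add: q_def poly_monom)
  have cq: "\<forall>i. coeff q i \<in> R" using p cm Rdiff by (simp add: q_def)
  have c1: "coeff q (Suc N) = 1" using p by (simp add: q_def coeff_eq_0)
  have "degree q = Suc N"
  proof (rule antisym)
    show "degree q \<le> Suc N" unfolding q_def
      using p by (intro degree_diff_le) (auto simp: degree_monom_le)
    show "Suc N \<le> degree q" using c1 by (intro le_degree) simp
  qed
  then have "lead_coeff q = 1" using c1 by simp
  then show "x \<in> R" using intcl[unfolded integrally_closed_def, rule_format, OF exI[of _ q]] cq pq by blast
qed

end

fun prodl :: "'k::field set \<Rightarrow> 'k set list \<Rightarrow> 'k set" where
  "prodl R [] = R"
| "prodl R (P # ps) = mod_prod P (prodl R ps)"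

context dd begin

lemma noeth_induct2[consumes 1, case_names step]:
  assumes "is_ideal R A0"
    and "\<And>A. is_ideal R A \<Longrightarrow> (\<And>B. is_ideal R B \<Longrightarrow> A \<subset> B \<Longrightarrow> Q B) \<Longrightarrow> Q A"
  shows "Q A0"
  using noeth_induct[of Q A0] assms by blast

lemma prodl_ideal: "\<forall>P\<in>set ps. is_ideal R P \<Longrightarrow> is_ideal R (prodl R ps)"
  by (induction ps) (auto simp: R_ideal mp_ideal sub)

lemma prodl_append:
  assumes "\<forall>P\<in>set qs. is_ideal R P"
  shows "prodl R (ps @ qs) = mod_prod (prodl R ps) (prodl R qs)"
proof (induction ps)
  case Nil
  show ?case using mp_unit2[OF sub ideal_rmod[OF prodl_ideal[OF assms]]] by simp
next
  case (Cons P ps)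
  then show ?case by (simp add: mp_assoc)
qed

lemma prodl_remove:
  assumes "\<forall>P\<in>set (us @ Q # vs). is_ideal R P"
  shows "prodl R (us @ Q # vs) = mod_prod Q (prodl R (us @ vs))"
proof -
  have "prodl R (us @ Q # vs) = mod_prod (prodl R us) (mod_prod Q (prodl R vs))"
    using prodl_append[of "Q # vs" us] assms by simp
  also have "\<dots> = mod_prod (mod_prod Q (prodl R us)) (prodl R vs)"
    by (simp only: mp_assoc[symmetric] mp_comm[of "prodl R us" Q])
  also have "\<dots> = mod_prod Q (prodl R (us @ vs))"
    using prodl_append[of vs us] assms by (simp add: mp_assoc)
  finally show ?thesis .
qed

lemma prime_contains:
  assumes P: "is_prime_ideal R P"
  shows "\<forall>Q\<in>set ps. is_ideal R Q \<Longrightarrow> prodl R ps \<subseteq> P \<Longrightarrow> \<exists>Q\<in>set ps. Q \<subseteq> P"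
proof (induction ps)
  case Nil
  then show ?case using P unfolding is_prime_ideal_def is_ideal_def by auto
next
  case (Cons Q ps)
  show ?case
  proof (cases "Q \<subseteq> P")
    case True then show ?thesis by simp
  next
    case False
    then obtain q where q: "q \<in> Q" "q \<notin> P" by blast
    have "prodl R ps \<subseteq> P"
    proof
      fix z assume z: "z \<in> prodl R ps"
      have "q * z \<in> P" using Cons.prems mp_mem[OF q(1) z] by auto
      moreover have "q \<in> R" using q Cons.prems ideal_sub by auto
      moreover have "z \<in> R" using z prodl_ideal Cons.prems ideal_sub by auto
      ultimately show "z \<in> P" using P q(2) unfolding is_prime_ideal_def by blast
    qed
    then show ?thesis using Cons by auto
  qed
qed

definition add_el :: "'k set \<Rightarrow> 'k \<Rightarrow> 'k set" where
  "add_el A b = {u + r * b | u r. u \<in> A \<and> r \<in> R}"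

lemma add_el_ideal:
  assumes A: "is_ideal R A" and b: "b \<in> R"
  shows "is_ideal R (add_el A b)" "A \<subseteq> add_el A b" "b \<in> add_el A b"
proof -
  show "A \<subseteq> add_el A b"
  proof
    fix u assume "u \<in> A" then have "u + 0 * b \<in> add_el A b" unfolding add_el_def using R0 by blast
    then show "u \<in> add_el A b" by simp
  qed
  have "0 + 1 * b \<in> add_el A b" unfolding add_el_def using R1 A[unfolded is_ideal_def] by blast
  then show "b \<in> add_el A b" by simp
  show "is_ideal R (add_el A b)" unfolding is_ideal_def
  proof (intro conjI ballI)
    show "add_el A b \<subseteq> R" unfolding add_el_def using A b Radd Rmult ideal_sub by blast
    have "0 + 0 * b \<in> add_el A b" unfolding add_el_def using R0 A[unfolded is_ideal_def] by blast
    then show "0 \<in> add_el A b" by simp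
  next
    fix x y assume "x \<in> add_el A b" "y \<in> add_el A b"
    then obtain u r u' r' where h: "u \<in> A" "r \<in> R" "x = u + r * b" "u' \<in> A" "r' \<in> R" "y = u' + r' * b"
      unfolding add_el_def by blast
    have "x + y = (u + u') + (r + r') * b" using h by (simp add: algebra_simps)
    moreover have "u + u' \<in> A" "r + r' \<in> R" using h A Radd by (auto simp: is_ideal_def)
    ultimately show "x + y \<in> add_el A b" unfolding add_el_def by blast
    have "x - y = (u - u') + (r - r') * b" using h by (simp add: algebra_simps)
    moreover have "u - u' \<in> A" "r - r' \<in> R" using h A Rdiff by (auto simp: is_ideal_def)
    ultimately show "x - y \<in> add_el A b" unfolding add_el_def by blast
  next
    fix s x assume s: "s \<in> R" and "x \<in> add_el A b"
    then obtain u r where h: "u \<in> A" "r \<in> R" "x = u + r * b" unfolding add_el_def by blast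
    have "s * x = s * u + (s * r) * b" using h by (simp add: algebra_simps)
    moreover have "s * u \<in> A" "s * r \<in> R" using h A s Rmult by (auto simp: is_ideal_def)
    ultimately show "s * x \<in> add_el A b" unfolding add_el_def by blast
  qed
qed

lemma add_el_prod:
  assumes A: "is_ideal R A" and b: "b1 \<in> R" "b2 \<in> R" "b1 * b2 \<in> A"
  shows "mod_prod (add_el A b1) (add_el A b2) \<subseteq> A"
proof (rule mp_least)
  show "0 \<in> A" using A by (simp add: is_ideal_def)
  show "\<And>a b. a \<in> A \<Longrightarrow> b \<in> A \<Longrightarrow> a + b \<in> A" using A by (simp add: is_ideal_def)
  fix x y assume "x \<in> add_el A b1" "y \<in> add_el A b2"
  then obtain u r u' s where h: "u \<in> A" "r \<in> R" "x = u + r * b1" "u' \<in> A" "s \<in> R" "y = u' + s * b2"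
    unfolding add_el_def by blast
  have "x * y = u * u' + u * (s * b2) + (r * b1) * u' + (r * s) * (b1 * b2)"
    using h by (simp add: algebra_simps)
  moreover have "u * u' \<in> A" using h A ideal_mult2 ideal_sub by blast
  moreover have "u * (s * b2) \<in> A" using h A b ideal_mult2 Rmult by blast
  moreover have "(r * b1) * u' \<in> A" using h A b ideal_mult Rmult by blast
  moreover have "(r * s) * (b1 * b2) \<in> A" using h A b ideal_mult Rmult by blast
  ultimately show "x * y \<in> A" using A by (simp add: is_ideal_def)
qed

definition good_list :: "'k set list \<Rightarrow> bool" where
  "good_list ps \<longleftrightarrow> (\<forall>P\<in>set ps. is_prime_ideal R P \<and> P \<noteq> {0})"

lemma good_ideals: "good_list ps \<Longrightarrow> \<forall>P\<in>set ps. is_ideal R P"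
  unfolding good_list_def is_prime_ideal_def by blast

lemma contains_primes:
  assumes "is_ideal R A" "A \<noteq> {0}"
  shows "\<exists>ps. good_list ps \<and> prodl R ps \<subseteq> A"
proof -
  have "A \<noteq> {0} \<longrightarrow> (\<exists>ps. good_list ps \<and> prodl R ps \<subseteq> A)"
    using assms(1)
  proof (induction rule: noeth_induct2)
    case (step A)
    show ?case
    proof
      assume nz: "A \<noteq> {0}"
      show "\<exists>ps. good_list ps \<and> prodl R ps \<subseteq> A"
      proof (cases "A = R")
        case True then show ?thesis by (intro exI[of _ "[]"]) (simp add: good_list_def)
      next
        case nR: False
        show ?thesis
        proof (cases "is_prime_ideal R A")
          case True
          have "prodl R [A] = A" using mp_unit[OF sub ideal_rmod[OF step(1)]] by simp
          then show ?thesis using True nz by (intro exI[of _ "[A]"]) (simp add: good_list_def)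
        next
          case False
          then obtain b1 b2 where b: "b1 \<in> R" "b2 \<in> R" "b1 * b2 \<in> A" "b1 \<notin> A" "b2 \<notin> A"
            using step(1) nR unfolding is_prime_ideal_def by blast
          have i1: "is_ideal R (add_el A b1)" "A \<subseteq> add_el A b1" "b1 \<in> add_el A b1"
            using add_el_ideal step(1) b by auto
          have i2: "is_ideal R (add_el A b2)" "A \<subseteq> add_el A b2" "b2 \<in> add_el A b2"
            using add_el_ideal step(1) b by auto
          have s1: "A \<subset> add_el A b1" using i1 b by blast
          have s2: "A \<subset> add_el A b2" using i2 b by blast
          have "add_el A b1 \<noteq> {0}" using s1 nz step(1) unfolding is_ideal_def by blast
          then obtain ps1 where p1: "good_list ps1" "prodl R ps1 \<subseteq> add_el A b1"
            using step(2)[OF i1(1) s1] i1(1) by blast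
          have "add_el A b2 \<noteq> {0}" using s2 nz step(1) unfolding is_ideal_def by blast
          then obtain ps2 where p2: "good_list ps2" "prodl R ps2 \<subseteq> add_el A b2"
            using step(2)[OF i2(1) s2] i2(1) by blast
          have "prodl R (ps1 @ ps2) = mod_prod (prodl R ps1) (prodl R ps2)"
            using prodl_append good_ideals p2(1) by blast
          also have "\<dots> \<subseteq> mod_prod (add_el A b1) (add_el A b2)" using p1 p2 by (rule_tac mp_mono) auto
          also have "\<dots> \<subseteq> A" using add_el_prod step(1) b by blast
          finally show ?thesis using p1 p2 by (intro exI[of _ "ps1 @ ps2"]) (auto simp: good_list_def)
        qed
      qed
    qed
  qed
  then show ?thesis using assms by blast
qed

end

context dd begin

lemma ideal_one: "is_ideal R M \<Longrightarrow> 1 \<in> M \<Longrightarrow> M = R"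
proof
  assume M: "is_ideal R M" "1 \<in> M"
  show "M \<subseteq> R" using M by (simp add: is_ideal_def)
  show "R \<subseteq> M"
  proof
    fix r assume "r \<in> R" then have "r * 1 \<in> M" using M ideal_mult by blast
    then show "r \<in> M" by simp
  qed
qed

lemma exists_inv_elem:
  assumes P: "is_prime_ideal R P" "P \<noteq> {0}"
  shows "\<exists>x. x \<notin> R \<and> (\<forall>p\<in>P. x * p \<in> R)"
proof -
  have Pid: "is_ideal R P" using P by (simp add: is_prime_ideal_def)
  obtain a where a: "a \<in> P" "a \<noteq> 0" using ideal_nz Pid P(2) by blast
  have aR: "a \<in> R" using ideal_sub Pid a by blast
  define aR where "aR = {a * r | r. r \<in> R}"
  have aRid: "is_ideal R aR" unfolding is_ideal_def
  proof (intro conjI ballI)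
    show "aR \<subseteq> R" unfolding aR_def using aR Rmult by blast
    have "a * 0 \<in> aR" unfolding aR_def using R0 by blast
    then show "0 \<in> aR" by simp
  next
    fix u v assume "u \<in> aR" "v \<in> aR"
    then obtain r s where h: "r \<in> R" "s \<in> R" "u = a * r" "v = a * s" unfolding aR_def by blast
    have "u + v = a * (r + s)" "u - v = a * (r - s)" using h by (simp_all add: algebra_simps)
    then show "u + v \<in> aR" "u - v \<in> aR" unfolding aR_def using h Radd Rdiff by blast+
  next
    fix t u assume t: "t \<in> R" and "u \<in> aR"
    then obtain r where h: "r \<in> R" "u = a * r" unfolding aR_def by blast
    have "t * u = a * (t * r)" using h by (simp add: algebra_simps)
    then show "t * u \<in> aR" unfolding aR_def using h t Rmult by blast
  qed
  have "a * 1 \<in> aR" unfolding aR_def using R1 by blast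
  then have aRnz: "aR \<noteq> {0}" using a by auto
  have aRP: "aR \<subseteq> P" unfolding aR_def using a Pid ideal_mult2 by blast
  obtain ps0 where "good_list ps0 \<and> prodl R ps0 \<subseteq> aR" using contains_primes aRid aRnz by blast
  then obtain ps where ps: "good_list ps" "prodl R ps \<subseteq> aR"
    and min: "\<forall>qs. good_list qs \<and> prodl R qs \<subseteq> aR \<longrightarrow> length ps \<le> length qs"
    using ex_has_least_nat[of "\<lambda>qs. good_list qs \<and> prodl R qs \<subseteq> aR" ps0 length] by blast
  obtain Q where Q: "Q \<in> set ps" "Q \<subseteq> P"
    using prime_contains[OF P(1) good_ideals[OF ps(1)]] ps(2) aRP by blast
  have Qmax: "is_maximal_ideal R Q" using ps(1) Q(1) primemax unfolding good_list_def by blast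
  have "P \<noteq> R" using P(1) by (simp add: is_prime_ideal_def)
  then have QP: "Q = P" using Qmax Q(2) Pid unfolding is_maximal_ideal_def by blast
  obtain us vs where uv: "ps = us @ Q # vs" using split_list[OF Q(1)] by blast
  have good': "good_list (us @ vs)" using ps(1) uv unfolding good_list_def by auto
  have "\<not> prodl R (us @ vs) \<subseteq> aR" using min good' uv by fastforce
  then obtain b where b: "b \<in> prodl R (us @ vs)" "b \<notin> aR" by blast
  have eq: "prodl R ps = mod_prod Q (prodl R (us @ vs))"
    using prodl_remove good_ideals ps(1) uv by blast
  show ?thesis
  proof (intro exI conjI ballI)
    show "b / a \<notin> R"
    proof
      assume "b / a \<in> R"
      then have "a * (b / a) \<in> aR" unfolding aR_def by blast
      then show False using b a by simp
    qed
  next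
    fix p assume p: "p \<in> P"
    have "p * b \<in> aR" using mp_mem[of p Q b] QP p b eq ps(2) by auto
    then obtain r where r: "r \<in> R" "p * b = a * r" unfolding aR_def by blast
    have "b / a * p = r" using r a by (simp add: field_simps)
    then show "b / a * p \<in> R" using r by simp
  qed
qed

lemma maximal_prime:
  assumes M: "is_maximal_ideal R M" shows "is_prime_ideal R M"
proof -
  have Mid: "is_ideal R M" and MR: "M \<noteq> R" using M by (auto simp: is_maximal_ideal_def)
  have "a * b \<in> M \<longrightarrow> a \<in> M \<or> b \<in> M" if ab: "a \<in> R" "b \<in> R" for a b
  proof (intro impI)
    assume abM: "a * b \<in> M"
    show "a \<in> M \<or> b \<in> M"
    proof (cases "a \<in> M")
      case False
      have "add_el M a = M \<or> add_el M a = R" using M add_el_ideal[OF Mid ab(1)]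
        unfolding is_maximal_ideal_def by blast
      then have "add_el M a = R" using False add_el_ideal[OF Mid ab(1)] by auto
      then have "1 \<in> add_el M a" using R1 by simp
      then obtain u r where h: "u \<in> M" "r \<in> R" "1 = u + r * a" unfolding add_el_def by blast
      have "b = b * u + r * (a * b)" using h by (metis mult.assoc mult.commute distrib_left mult_1_right)
      moreover have "b * u \<in> M" using h Mid ab ideal_mult by blast
      moreover have "r * (a * b) \<in> M" using h Mid abM ideal_mult by blast
      ultimately show ?thesis using Mid by (metis is_ideal_def)
    qed simp
  qed
  then show ?thesis using Mid MR unfolding is_prime_ideal_def by blast
qed

lemma exists_maximal:
  assumes "is_ideal R A" "A \<noteq> R" shows "\<exists>P. is_maximal_ideal R P \<and> A \<subseteq> P"
proof -
  have "A \<noteq> R \<longrightarrow> (\<exists>P. is_maximal_ideal R P \<and> A \<subseteq> P)" using assms(1)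
  proof (induction rule: noeth_induct2)
    case (step A)
    show ?case
    proof
      assume nR: "A \<noteq> R"
      show "\<exists>P. is_maximal_ideal R P \<and> A \<subseteq> P"
      proof (cases "is_maximal_ideal R A")
        case True then show ?thesis by blast
      next
        case False
        then obtain J where J: "is_ideal R J" "A \<subseteq> J" "J \<noteq> A" "J \<noteq> R"
          using step(1) nR unfolding is_maximal_ideal_def by blast
        then have "A \<subset> J" by blast
        then show ?thesis using step(2)[OF J(1)] J by blast
      qed
    qed
  qed
  then show ?thesis using assms by blast
qed

lemma inv_prime:
  assumes P: "is_prime_ideal R P" "P \<noteq> {0}"
  shows "mod_prod P (frac_inv R P) = R"
proof -
  have Pid: "is_ideal R P" using P by (simp add: is_prime_ideal_def)
  define M where "M = mod_prod P (frac_inv R P)"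
  have Mid: "is_ideal R M" unfolding M_def
    using rmod_ideal[OF sub mp_rmod[OF ideal_rmod[OF Pid]] mp_inv_sub[OF sub]] .
  have one: "1 \<in> frac_inv R P" unfolding frac_inv_def using Pid ideal_sub by auto
  have PM: "P \<subseteq> M"
  proof
    fix p assume "p \<in> P" then have "p * 1 \<in> M" unfolding M_def using one by (rule mp_mem)
    then show "p \<in> M" by simp
  qed
  have "M = P \<or> M = R" using primemax[OF P] Mid PM unfolding is_maximal_ideal_def by blast
  moreover have "M \<noteq> P"
  proof
    assume MP: "M = P"
    obtain x where x: "x \<notin> R" "\<forall>p\<in>P. x * p \<in> R" using exists_inv_elem[OF P] by blast
    have "x \<in> frac_inv R P" using x unfolding frac_inv_def by blast
    then have "\<forall>p\<in>P. x * p \<in> P" using MP mp_mem[of _ P x "frac_inv R P"] unfolding M_def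
      by (metis mult.commute)
    then have "x \<in> R" using stable_in_R[OF Pid P(2)] by blast
    then show False using x by blast
  qed
  ultimately show ?thesis unfolding M_def by blast
qed

theorem invertible:
  assumes "is_ideal R A" "A \<noteq> {0}"
  shows "mod_prod A (frac_inv R A) = R"
proof -
  have "A \<noteq> {0} \<longrightarrow> mod_prod A (frac_inv R A) = R" using assms(1)
  proof (induction rule: noeth_induct2)
    case (step A)
    show ?case
    proof
      assume nz: "A \<noteq> {0}"
      have Mid: "is_ideal R (mod_prod A (frac_inv R A))"
        using rmod_ideal[OF sub mp_rmod[OF ideal_rmod[OF step(1)]] mp_inv_sub[OF sub]] .
      show "mod_prod A (frac_inv R A) = R"
      proof (cases "A = R")
        case True
        have "1 \<in> frac_inv R R" unfolding frac_inv_def by simp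
        then have "1 * 1 \<in> mod_prod A (frac_inv R A)" using True R1 by (intro mp_mem) auto
        then show ?thesis using ideal_one Mid by simp
      next
        case False
        obtain P where P: "is_maximal_ideal R P" "A \<subseteq> P" using exists_maximal step(1) False by blast
        have Pp: "is_prime_ideal R P" using maximal_prime P(1) .
        have Pnz: "P \<noteq> {0}" using P(2) nz step(1) unfolding is_ideal_def by blast
        have Pid: "is_ideal R P" using Pp by (simp add: is_prime_ideal_def)
        define Pi where "Pi = frac_inv R P"
        define B where "B = mod_prod A Pi"
        have one: "1 \<in> Pi" unfolding Pi_def frac_inv_def using Pid ideal_sub by auto
        have BR: "B \<subseteq> R" unfolding B_def
          using mp_mono[OF P(2) order_refl, of Pi] inv_prime[OF Pp Pnz] Pi_def by simp
        have Bid: "is_ideal R B" unfolding B_def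
          using rmod_ideal[OF sub mp_rmod[OF ideal_rmod[OF step(1)]]] BR B_def by blast
        have AB: "A \<subseteq> B"
        proof
          fix a assume "a \<in> A" then have "a * 1 \<in> B" unfolding B_def using one by (rule mp_mem)
          then show "a \<in> B" by simp
        qed
        have "A \<noteq> B"
        proof
          assume AB': "A = B"
          obtain x where x: "x \<notin> R" "\<forall>p\<in>P. x * p \<in> R" using exists_inv_elem[OF Pp Pnz] by blast
          have "x \<in> Pi" using x unfolding Pi_def frac_inv_def by blast
          then have "\<forall>a\<in>A. x * a \<in> A" using AB' mp_mem[of _ A x Pi] unfolding B_def
            by (metis mult.commute)
          then have "x \<in> R" using stable_in_R[OF step(1) nz] by blast
          then show False using x by blast
        qed
        then have sAB: "A \<subset> B" using AB by blast
        then have "B \<noteq> {0}" using nz step(1) unfolding is_ideal_def by blast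
        then have IB: "mod_prod B (frac_inv R B) = R" using step(2)[OF Bid sAB] by blast
        have sub2: "mod_prod Pi (frac_inv R B) \<subseteq> frac_inv R A"
        proof (rule mp_least)
          show "0 \<in> frac_inv R A" "\<And>a b. a \<in> frac_inv R A \<Longrightarrow> b \<in> frac_inv R A \<Longrightarrow> a + b \<in> frac_inv R A"
            using frac_inv_rmod[OF sub, of A] unfolding rmod_def by blast+
          fix u v assume u: "u \<in> Pi" and v: "v \<in> frac_inv R B"
          have "\<forall>c\<in>A. u * v * c \<in> R"
          proof
            fix c assume "c \<in> A"
            then have "c * u \<in> B" unfolding B_def using u by (rule mp_mem)
            then have "v * (c * u) \<in> R" using v unfolding frac_inv_def by blast
            then show "u * v * c \<in> R" by (simp add: algebra_simps)
          qed
          then show "u * v \<in> frac_inv R A" unfolding frac_inv_def by blast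
        qed
        have "1 \<in> mod_prod B (frac_inv R B)" using IB R1 by simp
        also have "mod_prod B (frac_inv R B) = mod_prod A (mod_prod Pi (frac_inv R B))"
          unfolding B_def by (rule mp_assoc)
        also have "\<dots> \<subseteq> mod_prod A (frac_inv R A)" using sub2 by (rule_tac mp_mono) auto
        finally show ?thesis using ideal_one Mid by simp
      qed
    qed
  qed
  then show ?thesis using assms by blast
qed

end

lemma frac_rmod: "frac_ideal R I \<Longrightarrow> rmod R I"
  unfolding frac_ideal_def rmod_def by blast

lemma scale_inv_cancel: "c \<noteq> 0 \<Longrightarrow> scale_set c (scale_set (inverse c) S) = S"
  by (simp add: scale_scale scale_one)

lemma class_scale:
  assumes "a \<noteq> 0" "I = scale_set a X"
  shows "ideal_class R I = ideal_class R X"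
proof -
  have "(\<exists>b. b \<noteq> 0 \<and> Y = scale_set b I) \<longleftrightarrow> (\<exists>b. b \<noteq> 0 \<and> Y = scale_set b X)" for Y
  proof
    assume "\<exists>b. b \<noteq> 0 \<and> Y = scale_set b I"
    then obtain b where "b \<noteq> 0" "Y = scale_set b I" by blast
    then show "\<exists>b. b \<noteq> 0 \<and> Y = scale_set b X"
      using assms by (intro exI[of _ "b * a"]) (simp add: scale_scale)
  next
    assume "\<exists>b. b \<noteq> 0 \<and> Y = scale_set b X"
    then obtain b where b: "b \<noteq> 0" "Y = scale_set b X" by blast
    have "scale_set (b * inverse a) I = scale_set b X"
      using assms by (simp add: scale_scale mult.assoc)
    then show "\<exists>b. b \<noteq> 0 \<and> Y = scale_set b I"
      using assms b by (intro exI[of _ "b * inverse a"]) simp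
  qed
  then show ?thesis unfolding ideal_class_def by auto
qed

context dd begin

lemma pow_inv:
  assumes C: "is_ideal R C" "C \<noteq> {0}"
  shows "mod_prod (ideal_pow R C i) (ideal_pow R (frac_inv R C) i) = R"
    "rmod R (ideal_pow R (frac_inv R C) i)"
proof -
  define D where "D = frac_inv R C"
  have CD: "mod_prod C D = R" unfolding D_def using invertible C by blast
  show "mod_prod (ideal_pow R C i) (ideal_pow R (frac_inv R C) i) = R"
    unfolding D_def[symmetric]
  proof (induction i)
    case 0 then show ?case using mp_unit[OF sub subring_rmod[OF sub]] by simp
  next
    case (Suc i)
    have "mod_prod (mod_prod (ideal_pow R C i) C) (mod_prod (ideal_pow R D i) D) =
      mod_prod (mod_prod (ideal_pow R C i) (ideal_pow R D i)) (mod_prod C D)" by (rule mp_swap4)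
    then show ?case using Suc CD mp_unit[OF sub subring_rmod[OF sub]] by simp
  qed
  show "rmod R (ideal_pow R (frac_inv R C) i)"
    by (induction i) (auto simp: subring_rmod sub mp_rmod2 frac_inv_rmod)
qed

lemma main_claim:
  assumes C: "is_ideal R C" "C \<noteq> {0}"
  shows "I \<in> A_set R C (Suc j) - A_set R C j \<Longrightarrow>
    \<exists>a. a \<noteq> 0 \<and> I = scale_set a (ideal_pow R (frac_inv R C) (Suc j))"
proof (induction j arbitrary: I)
  define D where "D = frac_inv R C"
  have CD: "mod_prod C D = R" unfolding D_def using invertible C by blast
  have Drmod: "rmod R D" unfolding D_def using frac_inv_rmod[OF sub] .
  have recover: "I = mod_prod (mod_prod I C) D" if "frac_ideal R I" for I
  proof -
    have "I = mod_prod I R" using mp_unit[OF sub frac_rmod[OF that]] by simp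
    also have "\<dots> = mod_prod I (mod_prod C D)" by (simp only: CD)
    also have "\<dots> = mod_prod (mod_prod I C) D" by (rule mp_assoc[symmetric])
    finally show ?thesis .
  qed
  case 0
  then have IE: "I \<in> E_set R" and nR: "I \<noteq> R"
    and cond: "\<forall>x \<in> mod_prod I C - C. \<exists>y\<in>C. scale_set (inverse (x - y)) (mod_prod I C) \<in> {R}"
    by auto
  have fI: "frac_ideal R I" "R \<subseteq> I" using IE by (auto simp: E_set_def)
  have "\<not> mod_prod I C \<subseteq> C"
  proof
    assume "mod_prod I C \<subseteq> C"
    then have "mod_prod (mod_prod I C) D \<subseteq> mod_prod C D" by (rule mp_mono) simp
    then have "I \<subseteq> mod_prod C D" using recover[OF fI(1)] by simp
    then show False using CD fI(2) nR by auto
  qed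
  then obtain x where x: "x \<in> mod_prod I C" "x \<notin> C" by blast
  then obtain y where y: "y \<in> C" "scale_set (inverse (x - y)) (mod_prod I C) = R" using cond by auto
  have xy: "x - y \<noteq> 0" using x y by auto
  have "scale_set (x - y) (scale_set (inverse (x - y)) (mod_prod I C)) = scale_set (x - y) R"
    using y(2) by simp
  then have e: "mod_prod I C = scale_set (x - y) R" using scale_inv_cancel[OF xy] by simp
  have "I = mod_prod (mod_prod I C) D" using recover[OF fI(1)] .
  also have "\<dots> = scale_set (x - y) (mod_prod R D)" by (simp only: e mp_scale)
  finally have "I = scale_set (x - y) (mod_prod R D)" .
  then show ?case using xy D_def by (intro exI[of _ "x - y"]) simp
next
  define D where "D = frac_inv R C"
  have CD: "mod_prod C D = R" unfolding D_def using invertible C by blast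
  have recover: "I = mod_prod (mod_prod I C) D" if "frac_ideal R I" for I
  proof -
    have "I = mod_prod I R" using mp_unit[OF sub frac_rmod[OF that]] by simp
    also have "\<dots> = mod_prod I (mod_prod C D)" by (simp only: CD)
    also have "\<dots> = mod_prod (mod_prod I C) D" by (rule mp_assoc[symmetric])
    finally show ?thesis .
  qed
  case (Suc j)
  have m1: "I \<in> A_set R C (Suc (Suc j))" and m2: "I \<notin> A_set R C (Suc j)" using Suc.prems by auto
  have u1: "A_set R C (Suc (Suc j)) = A_set R C (Suc j) \<union>
     {I \<in> E_set R. \<forall>x \<in> mod_prod I C - C. \<exists>y\<in>C.
         scale_set (inverse (x - y)) (mod_prod I C) \<in> A_set R C (Suc j)}" by (rule A_set.simps(2))
  have u2: "A_set R C (Suc j) = A_set R C j \<union>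
     {I \<in> E_set R. \<forall>x \<in> mod_prod I C - C. \<exists>y\<in>C.
         scale_set (inverse (x - y)) (mod_prod I C) \<in> A_set R C j}" by (rule A_set.simps(2))
  have IE: "I \<in> E_set R"
    and cond: "\<forall>x \<in> mod_prod I C - C. \<exists>y\<in>C. scale_set (inverse (x - y)) (mod_prod I C) \<in> A_set R C (Suc j)"
    using m1 m2 unfolding u1 by blast+
  have ncond: "\<not> (\<forall>x \<in> mod_prod I C - C. \<exists>y\<in>C. scale_set (inverse (x - y)) (mod_prod I C) \<in> A_set R C j)"
    using m2 IE unfolding u2 by blast
  have fI: "frac_ideal R I" using IE by (auto simp: E_set_def)
  obtain x where x: "x \<in> mod_prod I C - C"
    and nx: "\<forall>y\<in>C. scale_set (inverse (x - y)) (mod_prod I C) \<notin> A_set R C j" using ncond by blast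
  obtain y where y: "y \<in> C" "scale_set (inverse (x - y)) (mod_prod I C) \<in> A_set R C (Suc j)"
    using cond x by blast
  have xy: "x - y \<noteq> 0" using x y by auto
  obtain a where a: "a \<noteq> 0" "scale_set (inverse (x - y)) (mod_prod I C) = scale_set a (ideal_pow R D (Suc j))"
    using Suc.IH[of "scale_set (inverse (x - y)) (mod_prod I C)"] y nx unfolding D_def by blast
  have "scale_set (x - y) (scale_set (inverse (x - y)) (mod_prod I C)) = scale_set (x - y) (scale_set a (ideal_pow R D (Suc j)))"
    using a(2) by simp
  then have e: "mod_prod I C = scale_set ((x - y) * a) (ideal_pow R D (Suc j))"
    using scale_inv_cancel[OF xy] by (simp add: scale_scale)
  have "I = mod_prod (mod_prod I C) D" using recover[OF fI] .
  also have "\<dots> = scale_set ((x - y) * a) (mod_prod (ideal_pow R D (Suc j)) D)" by (simp only: e mp_scale)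
  finally have "I = scale_set ((x - y) * a) (ideal_pow R D (Suc (Suc j)))" by (simp only: ideal_pow.simps(2))
  then show ?case using xy a D_def by (intro exI[of _ "(x - y) * a"]) simp
qed

end

theorem lemma2p3:
  fixes R C I :: "'k::field set" and i :: nat
  assumes "dedekind_domain R"
    and "is_ideal R C" and "C \<noteq> {0}"
    and "1 \<le> i"
    and "I \<in> A_set R C i - A_set R C (i - 1)"
  shows "ideal_class R I = ideal_class R (frac_inv R (ideal_pow R C i))"
proof -
  interpret dd R using assms(1) by unfold_locales
  have "\<exists>j. i = Suc j" using assms(4) by (intro exI[of _ "i - 1"]) simp
  then obtain j where j: "i = Suc j" by blast
  have "I \<in> A_set R C (Suc j) - A_set R C j" using assms(5) unfolding j by (simp del: A_set.simps(2))
  then obtain a where a: "a \<noteq> 0" "I = scale_set a (ideal_pow R (frac_inv R C) (Suc j))"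
    using main_claim[OF assms(2,3)] by blast
  have "frac_inv R (ideal_pow R C i) = ideal_pow R (frac_inv R C) i"
    using inv_unique[OF sub pow_inv(2)[OF assms(2,3)] pow_inv(1)[OF assms(2,3)]] .
  then show ?thesis using class_scale[OF a] j by simp
qed

end
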